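(* Assume $F$ is $K$-smooth with $\ell\in\mathrm{int}(K)$ and strongly $K$-convex with $\mu\in\mathrm{int}(K)$. Let $\{x^k\}$ be generated by Algorithm 6 where, for each $k\ge1$, $e_k:=\frac{(JF(x^k)-JF(x^{k-1}))(x^k-x^{k-1})}{\|x^k-x^{k-1}\|^2}$ (and $e_0\in\mathrm{int}(K)$ arbitrary), assumed not to terminate. Then for every $k\ge1$: (i) $\mu\preceq_K e_k\preceq_K\ell$ (in particular $e_k\in\mathrm{int}(K)$); (ii) $t_k\ge\min_{c^*\in C_e}\gamma\langle c^*,e_k\rangle/\langle c^*,\ell\rangle$.
   Context: $K\subset\mathbb{R}^m$ closed convex pointed cone with nonempty interior; $y\preceq_K y'$ iff $y'-y\in K$. $K^*=\{c:\langle c,y\rangle\ge0\ \forall y\in K\}$; for $e\in\mathrm{int}(K)$, $C_e:=\{c^*\in K^*:\langle c^*,e\rangle=1\}$. $F:\mathbb{R}^n\to\mathbb{R}^m$ differentiable with Jacobian $JF$. Strongly $K$-convex with $\mu$: $JF(x)(y-x)+\tfrac12\|y-x\|^2\mu\preceq_K F(y)-F(x)$ $\forall x,y$; $K$-smooth with $\ell$: $F(y)-F(x)\preceq_K JF(x)(y-x)+\tfrac12\|y-x\|^2\ell$ $\forall x,y$. Algorithm 6: given $x^0$, $\gamma\in(0,1)$, for $k=0,1,\dots$: choose $e_k\in\mathrm{int}(K)$; $d^k:=\arg\min_d\max_{c^*\in C_e}\langle c^*,JF(x^k)d+\tfrac12\|d\|^2e_k\rangle$; if $d^k=0$ stop;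 otherwise $t_k:=\max\{\gamma^j:j\in\mathbb{N},\ F(x^k+\gamma^jd^k)-F(x^k)\preceq_K\gamma^j(JF(x^k)d^k+\tfrac12\|d^k\|^2e_k)\}$, $x^{k+1}:=x^k+t_kd^k$. *)

theory Defs
  imports "HOL-Analysis.Analysis"
begin

definition proper_cone :: "'b::euclidean_space set \<Rightarrow> bool" where
  "proper_cone K \<longleftrightarrow> closed K \<and> convex K \<and> cone K \<and>
     (\<forall>y. y \<in> K \<and> - y \<in> K \<longrightarrow> y = 0) \<and> interior K \<noteq> {}"

definition kle :: "'b::real_vector set \<Rightarrow> 'b \<Rightarrow> 'b \<Rightarrow> bool" where
  "kle K y y' \<longleftrightarrow> y' - y \<in> K"

definition dual_cone :: "'b::real_inner set \<Rightarrow> 'b set" where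
  "dual_cone K = {c. \<forall>y\<in>K. 0 \<le> c \<bullet> y}"

definition Cset :: "'b::real_inner set \<Rightarrow> 'b \<Rightarrow> 'b set" where
  "Cset K e = {c \<in> dual_cone K. c \<bullet> e = 1}"

definition strongly_K_convex ::
  "'b::euclidean_space set \<Rightarrow> ('a::euclidean_space \<Rightarrow> 'b) \<Rightarrow> ('a \<Rightarrow> 'a \<Rightarrow> 'b) \<Rightarrow> 'b \<Rightarrow> bool" where
  "strongly_K_convex K F JF \<mu> \<longleftrightarrow>
     (\<forall>x y. kle K (JF x (y - x) + ((1/2) * (norm (y - x))\<^sup>2) *\<^sub>R \<mu>) (F y - F x))"

definition K_smooth ::
  "'b::euclidean_space set \<Rightarrow> ('a::euclidean_space \<Rightarrow> 'b) \<Rightarrow> ('a \<Rightarrow> 'a \<Rightarrow> 'b) \<Rightarrow> 'b \<Rightarrow> bool" where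
  "K_smooth K F JF l \<longleftrightarrow>
     (\<forall>x y. kle K (F y - F x) (JF x (y - x) + ((1/2) * (norm (y - x))\<^sup>2) *\<^sub>R l))"

definition dir_obj ::
  "'b::euclidean_space set \<Rightarrow> 'b \<Rightarrow> ('a::euclidean_space \<Rightarrow> 'b) \<Rightarrow> 'b \<Rightarrow> 'a \<Rightarrow> real" where
  "dir_obj K e A ek d = (SUP c\<in>Cset K e. c \<bullet> (A d + ((1/2) * (norm d)\<^sup>2) *\<^sub>R ek))"

definition armijo_set ::
  "'b::euclidean_space set \<Rightarrow> ('a::euclidean_space \<Rightarrow> 'b) \<Rightarrow> ('a \<Rightarrow> 'a \<Rightarrow> 'b) \<Rightarrow> real \<Rightarrow> 'a \<Rightarrow> 'a \<Rightarrow> 'b \<Rightarrow> real set" where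
  "armijo_set K F JF \<gamma> x d ek =
     {\<gamma> ^ j | j. kle K (F (x + (\<gamma> ^ j) *\<^sub>R d) - F x)
                       ((\<gamma> ^ j) *\<^sub>R (JF x d + ((1/2) * (norm d)\<^sup>2) *\<^sub>R ek))}"

end

theory Submission
  imports Defs
begin

lemma pc_cc: assumes "proper_cone K" shows "convex_cone K"
proof -
  have "K \<noteq> {}" using assms interior_subset unfolding proper_cone_def by blast
  then show ?thesis using assms unfolding proper_cone_def convex_cone_def conic_def cone_def by blast
qed

lemma pc_add: "proper_cone K \<Longrightarrow> a \<in> K \<Longrightarrow> b \<in> K \<Longrightarrow> a + b \<in> K"
  using pc_cc convex_cone_add by blast

lemma pc_scale: "proper_cone K \<Longrightarrow> 0 \<le> c \<Longrightarrow> a \<in> K \<Longrightarrow> c *\<^sub>R a \<in> K"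
  using pc_cc convex_cone_scaleR by blast

lemma pc_int_add:
  assumes K: "proper_cone K" and a: "a \<in> interior K" and b: "b \<in> K"
  shows "a + b \<in> interior K"
proof -
  obtain r where r: "r > 0" "ball a r \<subseteq> K" using a by (meson mem_interior)
  have "ball (a + b) r \<subseteq> K"
  proof
    fix y assume "y \<in> ball (a + b) r"
    then have "y - b \<in> ball a r" by (simp add: dist_norm algebra_simps)
    then have "y - b \<in> K" using r by blast
    then have "(y - b) + b \<in> K" using pc_add[OF K _ b] by blast
    then show "y \<in> K" by simp
  qed
  then show ?thesis using r by (meson mem_interior)
qed

lemma pc_dual:
  assumes K: "proper_cone K" and y: "\<And>c. c \<in> dual_cone K \<Longrightarrow> 0 \<le> c \<bullet> y"
  shows "y \<in> K"
proof (rule ccontr)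
  assume "y \<notin> K"
  then obtain a b where ab: "a \<bullet> y < b" "\<forall>x\<in>K. a \<bullet> x > b"
    using separating_hyperplane_closed_point[of K y] K unfolding proper_cone_def by blast
  have "0 \<in> K" using pc_cc[OF K] convex_cone_iff by blast
  then have b0: "b < 0" using ab by force
  have "a \<in> dual_cone K"
    unfolding dual_cone_def
  proof (clarify)
    fix x assume x: "x \<in> K"
    show "0 \<le> a \<bullet> x"
    proof (rule ccontr)
      assume "\<not> 0 \<le> a \<bullet> x"
      then have neg: "a \<bullet> x < 0" by simp
      define c where "c = b / (a \<bullet> x)"
      have c0: "c \<ge> 0" unfolding c_def using neg b0 by (simp add: divide_nonpos_neg)
      have "c *\<^sub>R x \<in> K" using pc_scale[OF K c0 x] .
      then have "b < a \<bullet> (c *\<^sub>R x)" using ab by blast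
      moreover have "a \<bullet> (c *\<^sub>R x) = b" unfolding c_def using neg by simp
      ultimately show False by simp
    qed
  qed
  then have "0 \<le> a \<bullet> y" using y by blast
  then show False using ab b0 by simp
qed

lemma pc_pos:
  assumes K: "proper_cone K" and c: "c \<in> dual_cone K" "c \<noteq> 0" and w: "w \<in> interior K"
  shows "c \<bullet> w > 0"
proof -
  obtain r where r: "r > 0" "ball w r \<subseteq> K" using w by (meson mem_interior)
  define z where "z = w - (r/2 / norm c) *\<^sub>R c"
  have "dist w z < r" unfolding z_def dist_norm using r c by simp
  then have "z \<in> K" using r by auto
  then have "0 \<le> c \<bullet> z" using c unfolding dual_cone_def by blast
  also have "c \<bullet> z = c \<bullet> w - r/2 * norm c"
    unfolding z_def using c by (simp add: inner_diff_right power2_norm_eq_inner[symmetric] power2_eq_square)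
  finally have "r/2 * norm c \<le> c \<bullet> w" by simp
  moreover have "r/2 * norm c > 0" using r c by simp
  ultimately show ?thesis by linarith
qed

lemma pc_C_ne:
  assumes K: "proper_cone K" and e: "e \<in> interior K"
  shows "Cset K e \<noteq> {}"
proof -
  obtain y :: 'a where y: "y \<noteq> 0" using nonzero_Basis by blast
  have "\<exists>z. z \<notin> K"
  proof (rule ccontr)
    assume "\<not> ?thesis" then have "y \<in> K" "-y \<in> K" by auto
    then show False using K y unfolding proper_cone_def by blast
  qed
  then obtain z where z: "z \<notin> K" by blast
  then obtain c where c: "c \<in> dual_cone K" "\<not> 0 \<le> c \<bullet> z" using pc_dual[OF K] by blast
  then have c0: "c \<noteq> 0" by auto
  have p: "c \<bullet> e > 0" using pc_pos[OF K c(1) c0 e] .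
  have "(1 / (c \<bullet> e)) *\<^sub>R c \<in> Cset K e"
    using c(1) p unfolding Cset_def dual_cone_def by auto
  then show ?thesis by blast
qed


lemma armijo_pos: "t \<in> armijo_set K F JF \<gamma> x d ek \<Longrightarrow> 0 < \<gamma> \<Longrightarrow> 0 < t"
  unfolding armijo_set_def by auto

theorem mainTheorem15:
  fixes K :: "'b::euclidean_space set"
    and F :: "'a::euclidean_space \<Rightarrow> 'b"
    and JF :: "'a \<Rightarrow> 'a \<Rightarrow> 'b"
    and \<mu> l e :: 'b
    and \<gamma> :: real
    and x d :: "nat \<Rightarrow> 'a"
    and ee :: "nat \<Rightarrow> 'b"
    and t :: "nat \<Rightarrow> real"
  assumes K: "proper_cone K"
    and deriv: "\<And>z. (F has_derivative JF z) (at z)"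
    and smooth: "K_smooth K F JF l" and l_int: "l \<in> interior K"
    and sconv: "strongly_K_convex K F JF \<mu>" and \<mu>_int: "\<mu> \<in> interior K"
    and e_int: "e \<in> interior K"
    and \<gamma>: "0 < \<gamma>" "\<gamma> < 1"
    and e0: "ee 0 \<in> interior K"
    and ek: "\<And>k. k \<ge> 1 \<Longrightarrow> ee k =
              (1 / (norm (x k - x (k - 1)))\<^sup>2) *\<^sub>R (JF (x k) (x k - x (k - 1)) - JF (x (k - 1)) (x k - x (k - 1)))"
    and dmin: "\<And>k d'. dir_obj K e (JF (x k)) (ee k) (d k) \<le> dir_obj K e (JF (x k)) (ee k) d'"
    and nonterm: "\<And>k. d k \<noteq> 0"
    and tmax: "\<And>k. t k \<in> armijo_set K F JF \<gamma> (x k) (d k) (ee k)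
                  \<and> (\<forall>s\<in>armijo_set K F JF \<gamma> (x k) (d k) (ee k). s \<le> t k)"
    and xnext: "\<And>k. x (Suc k) = x k + t k *\<^sub>R d k"
    and k1: "k \<ge> 1"
  shows "kle K \<mu> (ee k) \<and> kle K (ee k) l \<and> ee k \<in> interior K
         \<and> t k \<ge> (INF c\<in>Cset K e. \<gamma> * (c \<bullet> ee k) / (c \<bullet> l))"
proof -
  have lin: "\<And>z. linear (JF z)" using deriv has_derivative_linear by blast
  obtain p where kp: "k = Suc p" using k1 by (cases k) auto
  define v where "v = x k - x p"
  have tp: "t p > 0" using armijo_pos tmax \<gamma> by blast
  have v: "v = t p *\<^sub>R d p" unfolding v_def kp using xnext by simp
  have vn: "v \<noteq> 0" using v tp nonterm by simp
  define n where "n = (norm v)\<^sup>2"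
  have n0: "n > 0" unfolding n_def using vn by simp
  have eek: "ee k = (1 / n) *\<^sub>R (JF (x k) v - JF (x p) v)"
    using ek[OF k1] unfolding kp v_def n_def by (simp add: kp)
  have nvp: "norm (x p - x k) = norm v" unfolding v_def by (simp add: norm_minus_commute)
  have negv: "\<And>z. JF z (x p - x k) = - JF z v"
    unfolding v_def using lin by (metis linear_neg minus_diff_eq)
  have A1: "F (x k) - F (x p) - (JF (x p) v + ((1/2) * n) *\<^sub>R \<mu>) \<in> K"
    using sconv unfolding strongly_K_convex_def kle_def v_def n_def by blast
  have A2: "F (x p) - F (x k) - (- JF (x k) v + ((1/2) * n) *\<^sub>R \<mu>) \<in> K"
    using sconv unfolding strongly_K_convex_def kle_def n_def
    by (metis nvp negv)
  have "(F (x k) - F (x p) - (JF (x p) v + ((1/2) * n) *\<^sub>R \<mu>)) + (F (x p) - F (x k) - (- JF (x k) v + ((1/2) * n) *\<^sub>R \<mu>)) \<in> K"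
    using pc_add[OF K A1 A2] .
  also have "(F (x k) - F (x p) - (JF (x p) v + ((1/2) * n) *\<^sub>R \<mu>)) + (F (x p) - F (x k) - (- JF (x k) v + ((1/2) * n) *\<^sub>R \<mu>))
      = (JF (x k) v - JF (x p) v) - n *\<^sub>R \<mu>"
    by (simp add: algebra_simps scaleR_add_left[symmetric])
  finally have L: "(JF (x k) v - JF (x p) v) - n *\<^sub>R \<mu> \<in> K" .
  have "(1/n) *\<^sub>R ((JF (x k) v - JF (x p) v) - n *\<^sub>R \<mu>) \<in> K"
    using pc_scale[OF K _ L] n0 by simp
  also have "(1/n) *\<^sub>R ((JF (x k) v - JF (x p) v) - n *\<^sub>R \<mu>) = ee k - \<mu>"
    unfolding eek using n0 by (simp add: scaleR_diff_right)
  finally have i1: "ee k - \<mu> \<in> K" .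
  have B1: "JF (x p) v + ((1/2) * n) *\<^sub>R l - (F (x k) - F (x p)) \<in> K"
    using smooth unfolding K_smooth_def kle_def v_def n_def by blast
  have B2: "- JF (x k) v + ((1/2) * n) *\<^sub>R l - (F (x p) - F (x k)) \<in> K"
    using smooth unfolding K_smooth_def kle_def n_def
    by (metis nvp negv)
  have "(JF (x p) v + ((1/2) * n) *\<^sub>R l - (F (x k) - F (x p))) + (- JF (x k) v + ((1/2) * n) *\<^sub>R l - (F (x p) - F (x k))) \<in> K"
    using pc_add[OF K B1 B2] .
  also have "(JF (x p) v + ((1/2) * n) *\<^sub>R l - (F (x k) - F (x p))) + (- JF (x k) v + ((1/2) * n) *\<^sub>R l - (F (x p) - F (x k)))
      = n *\<^sub>R l - (JF (x k) v - JF (x p) v)"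
    by (simp add: algebra_simps scaleR_add_left[symmetric])
  finally have U: "n *\<^sub>R l - (JF (x k) v - JF (x p) v) \<in> K" .
  have "(1/n) *\<^sub>R (n *\<^sub>R l - (JF (x k) v - JF (x p) v)) \<in> K"
    using pc_scale[OF K _ U] n0 by simp
  also have "(1/n) *\<^sub>R (n *\<^sub>R l - (JF (x k) v - JF (x p) v)) = l - ee k"
    unfolding eek using n0 by (simp add: scaleR_diff_right)
  finally have i2: "l - ee k \<in> K" .
  have i3: "ee k \<in> interior K" using pc_int_add[OF K \<mu>_int i1] by simp
  have eK: "ee k \<in> K" using i3 interior_subset by blast
  define C where "C = Cset K e"
  define m where "m = (INF c\<in>C. \<gamma> * (c \<bullet> ee k) / (c \<bullet> l))"
  have Cne: "C \<noteq> {}" unfolding C_def using pc_C_ne[OF K e_int] .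
  have Cpos: "\<And>c. c \<in> C \<Longrightarrow> c \<bullet> l > 0"
  proof -
    fix c assume c: "c \<in> C"
    then have "c \<noteq> 0" "c \<in> dual_cone K" unfolding C_def Cset_def by auto
    then show "c \<bullet> l > 0" using pc_pos[OF K _ _ l_int] by blast
  qed
  have bdd: "bdd_below ((\<lambda>c. \<gamma> * (c \<bullet> ee k) / (c \<bullet> l)) ` C)"
  proof (rule bdd_belowI2[where m=0])
    fix c assume c: "c \<in> C"
    then have "c \<bullet> ee k \<ge> 0" using eK unfolding C_def Cset_def dual_cone_def by auto
    then show "0 \<le> \<gamma> * (c \<bullet> ee k) / (c \<bullet> l)" using Cpos[OF c] \<gamma> by simp
  qed
  have mle: "\<And>c. c \<in> C \<Longrightarrow> m \<le> \<gamma> * (c \<bullet> ee k) / (c \<bullet> l)"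
    unfolding m_def by (rule cINF_lower[OF bdd])
  have m1: "m \<le> 1"
  proof -
    obtain c where c: "c \<in> C" using Cne by blast
    have "c \<bullet> (l - ee k) \<ge> 0" using i2 c unfolding C_def Cset_def dual_cone_def by auto
    then have "c \<bullet> ee k \<le> c \<bullet> l" by (simp add: inner_diff_right)
    then have "(c \<bullet> ee k) / (c \<bullet> l) \<le> 1" using Cpos[OF c] by simp
    moreover have "c \<bullet> ee k \<ge> 0" using eK c unfolding C_def Cset_def dual_cone_def by auto
    ultimately have "\<gamma> * (c \<bullet> ee k) / (c \<bullet> l) \<le> 1" using \<gamma>
      by (metis less_eq_real_def mult_le_one times_divide_eq_right divide_nonneg_pos Cpos[OF c])
    then show ?thesis using mle[OF c] by simp
  qed
  have arm: "\<And>s. 0 < s \<Longrightarrow> \<gamma> * s \<le> m \<Longrightarrow>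
     kle K (F (x k + s *\<^sub>R d k) - F (x k)) (s *\<^sub>R (JF (x k) (d k) + ((1/2) * (norm (d k))\<^sup>2) *\<^sub>R ee k))"
  proof -
    fix s :: real assume s: "0 < s" "\<gamma> * s \<le> m"
    have el: "ee k - s *\<^sub>R l \<in> K"
    proof (rule pc_dual[OF K])
      fix c assume c: "c \<in> dual_cone K"
      show "0 \<le> c \<bullet> (ee k - s *\<^sub>R l)"
      proof (cases "c = 0")
        case True then show ?thesis by simp
      next
        case False
        have ce: "c \<bullet> e > 0" using pc_pos[OF K c False e_int] .
        define c' where "c' = (1 / (c \<bullet> e)) *\<^sub>R c"
        have c'C: "c' \<in> C" unfolding c'_def C_def Cset_def dual_cone_def
          using c ce unfolding dual_cone_def by auto
        have "\<gamma> * s \<le> \<gamma> * (c' \<bullet> ee k) / (c' \<bullet> l)" using s mle[OF c'C] by linarith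
        then have "s \<le> (c' \<bullet> ee k) / (c' \<bullet> l)" using \<gamma> by (metis times_divide_eq_right mult_le_cancel_left_pos)
        then have "s * (c' \<bullet> l) \<le> c' \<bullet> ee k" using Cpos[OF c'C] by (simp add: pos_le_divide_eq)
        then have "s * (c \<bullet> l) / (c \<bullet> e) \<le> (c \<bullet> ee k) / (c \<bullet> e)" unfolding c'_def by simp
        then have "s * (c \<bullet> l) \<le> c \<bullet> ee k" using ce by (simp add: divide_right_mono_neg divide_le_cancel)
        then show ?thesis by (simp add: inner_diff_right)
      qed
    qed
    define D where "D = d k"
    have B: "JF (x k) (s *\<^sub>R D) + ((1/2) * (norm (s *\<^sub>R D))\<^sup>2) *\<^sub>R l - (F (x k + s *\<^sub>R D) - F (x k)) \<in> K"
      using smooth unfolding K_smooth_def kle_def by (metis add_diff_cancel_left')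
    have B2: "((1/2) * s * (norm D)\<^sup>2) *\<^sub>R (ee k - s *\<^sub>R l) \<in> K"
      using pc_scale[OF K _ el] s by simp
    have "(JF (x k) (s *\<^sub>R D) + ((1/2) * (norm (s *\<^sub>R D))\<^sup>2) *\<^sub>R l - (F (x k + s *\<^sub>R D) - F (x k)))
        + ((1/2) * s * (norm D)\<^sup>2) *\<^sub>R (ee k - s *\<^sub>R l) \<in> K" using pc_add[OF K B B2] .
    also have "(JF (x k) (s *\<^sub>R D) + ((1/2) * (norm (s *\<^sub>R D))\<^sup>2) *\<^sub>R l - (F (x k + s *\<^sub>R D) - F (x k)))
        + ((1/2) * s * (norm D)\<^sup>2) *\<^sub>R (ee k - s *\<^sub>R l)
        = s *\<^sub>R (JF (x k) D + ((1/2) * (norm D)\<^sup>2) *\<^sub>R ee k) - (F (x k + s *\<^sub>R D) - F (x k))"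
      using lin[of "x k"] s
      by (simp add: linear_cmul power_mult_distrib algebra_simps scaleR_diff_right power2_eq_square)
    finally show "kle K (F (x k + s *\<^sub>R d k) - F (x k)) (s *\<^sub>R (JF (x k) (d k) + ((1/2) * (norm (d k))\<^sup>2) *\<^sub>R ee k))"
      unfolding kle_def D_def .
  qed
  have "m \<le> t k"
  proof (cases "m \<le> 0")
    case True
    have "t k > 0" using armijo_pos tmax \<gamma> by blast
    then show ?thesis using True by simp
  next
    case False
    then have mpos: "m > 0" by simp
    have ex: "\<exists>j. \<gamma> ^ j < m / \<gamma>" using real_arch_pow_inv[of "m/\<gamma>" \<gamma>] mpos \<gamma> by simp
    define j where "j = (LEAST j. \<gamma> ^ j \<le> m / \<gamma>)"
    have jP: "\<gamma> ^ j \<le> m / \<gamma>" unfolding j_def using ex by (metis LeastI less_eq_real_def)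
    have "\<gamma> ^ j \<in> armijo_set K F JF \<gamma> (x k) (d k) (ee k)"
      unfolding armijo_set_def using arm[of "\<gamma> ^ j"] jP \<gamma>
      by (auto simp: pos_le_divide_eq mult.commute)
    then have tj: "\<gamma> ^ j \<le> t k" using tmax by blast
    show ?thesis
    proof (cases j)
      case 0 then show ?thesis using tj m1 by simp
    next
      case (Suc i)
      have "\<not> \<gamma> ^ i \<le> m / \<gamma>" using not_less_Least[of i "\<lambda>j. \<gamma> ^ j \<le> m / \<gamma>"] Suc unfolding j_def by simp
      then have "m < \<gamma> * \<gamma> ^ i" using \<gamma> by (simp add: divide_less_eq mult.commute not_le)
      then show ?thesis using tj Suc by simp
    qed
  qed
  then show ?thesis using i1 i2 i3 unfolding kle_def m_def C_def by simp
qed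

end
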